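(* Let $A[0\ldots n-1]$, $B[0\ldots m-1]$ be sequences over a totally ordered alphabet. The sparse-DAG algorithm described in the context returns $\operatorname{LCBS}(A,B)$, the length of a longest common bitonic subsequence of $A$ and $B$.
   Context: A common subsequence of $A$ and $B$ is given by index pairs $(i_1,j_1),\dots,(i_\ell,j_\ell)$ with $i_1<\dots<i_\ell$, $j_1<\dots<j_\ell$ and $A[i_k]=B[j_k]$; it is bitonic if there is $h\in\{1,\dots,\ell\}$ with $A[i_1]<\dots<A[i_h]$ and $A[i_h]>\dots>A[i_\ell]$. $\operatorname{LCBS}(A,B)$ is the maximum length of a bitonic common subsequence ($0$ if there is none). Sparse-DAG algorithm: let $V=\{(i,j)\mid A[i]=B[j]\}$, sorted lexicographically by $(i$ ascending, $j$ ascending$)$. For $v=(i,j)\in V$ let $r_J(v)$ be $1$ plus the rank of $j$ among the distinct column indices in $V$, $r_V(v)$ the rank (from $1$) of $A[i]$ among the sorted distinct values of $A\cup B$, and $MAX_J=\max_v r_J(v)$. A 2-D range structure stores points with keys $(x,y)$ and values, supports $\textsc{Query}(a,b)$ = maximum value of stored points with $x\le a$, $y\le b$ ($0$ if none), and $\textsc{Update}((x,y),val)$. Forward pass (empty structure): for $v$ in sorted order, $INC[v]\gets\textsc{Query}(r_J(v)-1,r_V(v)-1)+1$, then $\textsc{Update}((r_J(v),r_V(v)),INC[v])$. Backward pass (new empty structure): for $v$ in reverse sorted order, with $\widehat r_J(v)=MAX_J-r_J(v)+1$, $DEC[v]\gets\textsc{Query}(\widehat r_J(v)-1,r_V(v)-1)+1$,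 then $\textsc{Update}((\widehat r_J(v),r_V(v)),DEC[v])$. Output $bestLen=\max\bigl(0,\max_{v\in V}(INC[v]+DEC[v]-1)\bigr)$. *)

theory Defs
  imports Main
begin

text \<open>A bitonic common subsequence, given by index lists is (into A) and js (into B),
  0-indexed. The turning point h is 0-indexed here (h < length is).\<close>
definition is_bcs :: "'a::linorder list \<Rightarrow> 'a list \<Rightarrow> nat list \<Rightarrow> nat list \<Rightarrow> bool" where
  "is_bcs A B is js \<longleftrightarrow>
     length is = length js \<and>
     sorted_wrt (<) is \<and> sorted_wrt (<) js \<and>
     (\<forall>i\<in>set is. i < length A) \<and> (\<forall>j\<in>set js. j < length B) \<and>
     (\<forall>k<length is. A ! (is ! k) = B ! (js ! k)) \<and>
     (\<exists>h<length is.
        (\<forall>k. k < h \<longrightarrow> A ! (is ! k) < A ! (is ! Suc k)) \<and>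
        (\<forall>k. h \<le> k \<and> Suc k < length is \<longrightarrow> A ! (is ! k) > A ! (is ! Suc k)))"

definition LCBS :: "'a::linorder list \<Rightarrow> 'a list \<Rightarrow> nat" where
  "LCBS A B = Max (insert 0 {length is | is js. is_bcs A B is js})"

definition matchV :: "'a list \<Rightarrow> 'a list \<Rightarrow> (nat \<times> nat) list" where
  "matchV A B = [(i, j). i \<leftarrow> [0..<length A], j \<leftarrow> [0..<length B], A ! i = B ! j]"

definition colsV :: "'a list \<Rightarrow> 'a list \<Rightarrow> nat set" where
  "colsV A B = snd ` set (matchV A B)"

definition rJ :: "'a list \<Rightarrow> 'a list \<Rightarrow> nat \<times> nat \<Rightarrow> nat" where
  "rJ A B v = 1 + card {j' \<in> colsV A B. j' \<le> snd v}"

definition rV :: "'a::linorder list \<Rightarrow> 'a list \<Rightarrow> nat \<times> nat \<Rightarrow> nat" where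
  "rV A B v = card {x \<in> set A \<union> set B. x \<le> A ! fst v}"

definition MAXJ :: "'a list \<Rightarrow> 'a list \<Rightarrow> nat" where
  "MAXJ A B = Max (rJ A B ` set (matchV A B))"

text \<open>2-D range structure: the list of stored points ((x,y), val).\<close>
type_synonym rstruct = "((nat \<times> nat) \<times> nat) list"

definition rquery :: "rstruct \<Rightarrow> nat \<Rightarrow> nat \<Rightarrow> nat" where
  "rquery S a b = Max (insert 0 {val. \<exists>x y. ((x, y), val) \<in> set S \<and> x \<le> a \<and> y \<le> b})"

definition rupdate :: "nat \<times> nat \<Rightarrow> nat \<Rightarrow> rstruct \<Rightarrow> rstruct" where
  "rupdate p val S = (p, val) # S"

definition fwd_step :: "'a::linorder list \<Rightarrow> 'a list \<Rightarrow> nat \<times> nat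
    \<Rightarrow> rstruct \<times> (nat \<times> nat \<Rightarrow> nat) \<Rightarrow> rstruct \<times> (nat \<times> nat \<Rightarrow> nat)" where
  "fwd_step A B v st =
     (let S = fst st; inc = snd st;
          k = rquery S (rJ A B v - 1) (rV A B v - 1) + 1
      in (rupdate (rJ A B v, rV A B v) k S, inc(v := k)))"

definition INC :: "'a::linorder list \<Rightarrow> 'a list \<Rightarrow> nat \<times> nat \<Rightarrow> nat" where
  "INC A B = snd (fold (fwd_step A B) (matchV A B) ([], (\<lambda>_. 0)))"

definition bwd_step :: "'a::linorder list \<Rightarrow> 'a list \<Rightarrow> nat \<times> nat
    \<Rightarrow> rstruct \<times> (nat \<times> nat \<Rightarrow> nat) \<Rightarrow> rstruct \<times> (nat \<times> nat \<Rightarrow> nat)" where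
  "bwd_step A B v st =
     (let S = fst st; dec = snd st;
          hr = MAXJ A B - rJ A B v + 1;
          k = rquery S (hr - 1) (rV A B v - 1) + 1
      in (rupdate (hr, rV A B v) k S, dec(v := k)))"

definition DEC :: "'a::linorder list \<Rightarrow> 'a list \<Rightarrow> nat \<times> nat \<Rightarrow> nat" where
  "DEC A B = snd (fold (bwd_step A B) (rev (matchV A B)) ([], (\<lambda>_. 0)))"

definition bestLen :: "'a::linorder list \<Rightarrow> 'a list \<Rightarrow> nat" where
  "bestLen A B = Max (insert 0 ((\<lambda>v. INC A B v + DEC A B v - 1) ` set (matchV A B)))"

end

theory Submission
  imports Defs
begin

definition lexless :: "nat \<times> nat \<Rightarrow> nat \<times> nat \<Rightarrow> bool" where
  "lexless u v \<longleftrightarrow> fst u < fst v \<or> (fst u = fst v \<and> snd u < snd v)"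

lemma inner_sorted: "sorted_wrt (<) js \<Longrightarrow>
  sorted_wrt lexless (concat (map (\<lambda>j. if P j then [(i, j)] else []) js))"
  by (induction js) (auto simp: sorted_wrt_append lexless_def)

lemma inner_set: "set (concat (map (\<lambda>j. if P j then [(i, j)] else []) js)) = {(i,j)|j. j \<in> set js \<and> P j}"
  by (induction js) auto

lemma outer_sorted: "sorted_wrt (<) js \<Longrightarrow> sorted_wrt (<) is \<Longrightarrow>
  sorted_wrt lexless (concat (map (\<lambda>i. concat (map (\<lambda>j. if P i j then [(i, j)] else []) js)) is))"
  by (induction "is") (auto simp: sorted_wrt_append lexless_def inner_set intro!: inner_sorted)

lemma matchV_sorted: "sorted_wrt lexless (matchV A B)"
  unfolding matchV_def by (rule outer_sorted) simp_all

lemma matchV_set: "set (matchV A B) = {(i,j). i < length A \<and> j < length B \<and> A ! i = B ! j}"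
  unfolding matchV_def by auto

lemma matchV_distinct: "distinct (matchV A B)"
proof -
  have "sorted_wrt P xs \<Longrightarrow> (\<forall>x. \<not> P x x) \<Longrightarrow> distinct xs" for P and xs :: "(nat\<times>nat) list"
    by (induction xs) auto
  then show ?thesis using matchV_sorted[of A B] by (auto simp: lexless_def)
qed

definition gstep :: "('v \<Rightarrow> nat) \<Rightarrow> ('v \<Rightarrow> nat) \<Rightarrow> 'v \<Rightarrow> rstruct \<times> ('v \<Rightarrow> nat) \<Rightarrow> rstruct \<times> ('v \<Rightarrow> nat)" where
 "gstep kx ky v st = (let k = rquery (fst st) (kx v - 1) (ky v - 1) + 1 in (((kx v, ky v), k) # fst st, (snd st)(v := k)))"

lemma fwd_eq: "fwd_step A B = gstep (rJ A B) (rV A B)"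
  by (auto simp: fun_eq_iff fwd_step_def gstep_def Let_def rupdate_def)

lemma bwd_eq: "bwd_step A B = gstep (\<lambda>v. MAXJ A B - rJ A B v + 1) (rV A B)"
  by (auto simp: fun_eq_iff bwd_step_def gstep_def Let_def rupdate_def)

lemma gfold_other: "v \<notin> set xs \<Longrightarrow> snd (fold (gstep kx ky) xs s) v = snd s v"
  by (induction xs arbitrary: s) (auto simp: gstep_def Let_def)

lemma gfold_fst: "distinct xs \<Longrightarrow> fst (fold (gstep kx ky) xs s) =
   map (\<lambda>v. ((kx v, ky v), snd (fold (gstep kx ky) xs s) v)) (rev xs) @ fst s"
proof (induction xs rule: rev_induct)
  case Nil then show ?case by simp
next
  case (snoc x xs)
  define t where "t = fold (gstep kx ky) xs s"
  have IH: "fst t = map (\<lambda>v. ((kx v, ky v), snd t v)) (rev xs) @ fst s"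
    using snoc by (simp add: t_def)
  have nx: "x \<notin> set xs" using snoc.prems by simp
  have "map (\<lambda>v. ((kx v, ky v), ((snd t)(x := rquery (fst t) (kx x - 1) (ky x - 1) + 1)) v)) (rev xs)
      = map (\<lambda>v. ((kx v, ky v), snd t v)) (rev xs)"
    using nx by (intro map_cong) auto
  moreover have e: "fold (gstep kx ky) (xs @ [x]) s = gstep kx ky x t" by (simp add: t_def)
  ultimately show ?case using IH unfolding e by (simp add: gstep_def Let_def)
qed

lemma gfold_val:
  fixes kx ky :: "'v \<Rightarrow> nat" and f0 :: "'v \<Rightarrow> nat"
  assumes d: "distinct (ys @ x # zs)"
  defines "F \<equiv> snd (fold (gstep kx ky) (ys @ x # zs) ([], f0))"
  shows "F x = Max (insert 0 (F ` {v \<in> set ys. kx v \<le> kx x - 1 \<and> ky v \<le> ky x - 1})) + 1"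
proof -
  define t where "t = fold (gstep kx ky) ys ([], f0)"
  have F: "F = snd (fold (gstep kx ky) zs (gstep kx ky x t))"
    by (simp add: F_def t_def)
  have nz: "x \<notin> set zs" using d by simp
  have Fx: "F x = rquery (fst t) (kx x - 1) (ky x - 1) + 1"
    using gfold_other[OF nz] by (simp add: F gstep_def Let_def)
  have Fv: "F v = snd t v" if "v \<in> set ys" for v
  proof -
    have "v \<notin> set zs" "v \<noteq> x" using d that by auto
    then show ?thesis using gfold_other[of v zs] by (simp add: F gstep_def Let_def)
  qed
  have ft: "fst t = map (\<lambda>v. ((kx v, ky v), snd t v)) (rev ys)"
    using gfold_fst[of ys kx ky "([], f0)"] d by (simp add: t_def)
  have "{val. \<exists>a b. ((a, b), val) \<in> set (fst t) \<and> a \<le> kx x - 1 \<and> b \<le> ky x - 1}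
      = F ` {v \<in> set ys. kx v \<le> kx x - 1 \<and> ky v \<le> ky x - 1}"
    unfolding ft using Fv by force
  then show ?thesis using Fx by (simp add: rquery_def)
qed

lemma chain_exists:
  assumes fin: "finite X" and rec: "\<forall>v\<in>X. F v = Max (insert 0 (F ` {u\<in>X. R u v})) + 1"
  shows "v \<in> X \<Longrightarrow> \<exists>cs. cs \<noteq> [] \<and> last cs = v \<and> set cs \<subseteq> X \<and> successively R cs \<and> length cs = F v"
proof -
  have "\<And>v. v \<in> X \<Longrightarrow> F v = n \<Longrightarrow> \<exists>cs. cs \<noteq> [] \<and> last cs = v \<and> set cs \<subseteq> X \<and> successively R cs \<and> length cs = F v" for n
  proof (induction n rule: less_induct)
  case (less n v)
  let ?S = "{u\<in>X. R u v}"
  have rv: "F v = Max (insert 0 (F ` ?S)) + 1" using bspec[OF rec less.prems(1)] .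
  show ?case
  proof (cases "?S = {}")
    case True
    then have "F v = 1" using rv unfolding True by simp
    then show ?thesis using less.prems(1) by (intro exI[of _ "[v]"]) auto
  next
    case False
    then obtain u0 where u0: "u0 \<in> ?S" by blast
    have fin2: "finite (insert 0 (F ` ?S))" using fin by simp
    have mi: "Max (insert 0 (F ` ?S)) \<in> insert 0 (F ` ?S)" by (rule Max_in[OF fin2]) simp
    have m1: "F u0 \<le> Max (insert 0 (F ` ?S))" using u0 fin2 by (intro Max_ge) auto
    have m2: "F u0 \<ge> 1"
    proof -
      have "u0 \<in> X" using u0 by blast
      from bspec[OF rec this] have "F u0 = Max (insert 0 (F ` {u\<in>X. R u u0})) + 1" .
      then show ?thesis by linarith
    qed
    have "Max (insert 0 (F ` ?S)) \<noteq> 0" using m1 m2 by linarith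
    with mi have "Max (insert 0 (F ` ?S)) \<in> F ` ?S" by blast
    then obtain u where u2': "Max (insert 0 (F ` ?S)) = F u" and u1: "u \<in> ?S" by (rule imageE)
    have u: "u \<in> ?S" "F u = Max (insert 0 (F ` ?S))" using u1 u2' by simp_all
    then have "F u < F v" using rv by linarith
    have uX: "u \<in> X" using u by blast
    obtain cs where cs: "cs \<noteq> []" "last cs = u" "set cs \<subseteq> X" "successively R cs" "length cs = F u"
      using less.IH[OF _ uX refl] \<open>F u < F v\<close> less.prems(2) by blast
    have "R u v" using u by blast
    have "length (cs @ [v]) = F v" using cs(5) u(2) rv by simp
    moreover have "successively R (cs @ [v])" using cs(1,2,4) \<open>R u v\<close> by (simp add: successively_append_iff)
    moreover have "set (cs @ [v]) \<subseteq> X" using cs(3) less.prems(1) by simp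
    ultimately show ?thesis by (intro exI[of _ "cs @ [v]"]) simp
  qed
  qed
  then show "v \<in> X \<Longrightarrow> ?thesis" by blast
qed

lemma chain_bound:
  assumes fin: "finite X" and rec: "\<forall>v\<in>X. F v = Max (insert 0 (F ` {u\<in>X. R u v})) + 1"
  shows "successively R cs \<Longrightarrow> cs \<noteq> [] \<Longrightarrow> set cs \<subseteq> X \<Longrightarrow> length cs \<le> F (last cs)"
proof (induction cs rule: rev_induct)
  case Nil then show ?case by simp
next
  case (snoc x xs)
  have xX: "x \<in> X" using snoc.prems by simp
  have rx: "F x = Max (insert 0 (F ` {u\<in>X. R u x})) + 1" using bspec[OF rec xX] .
  show ?case
  proof (cases "xs = []")
    case True then show ?thesis using rx by simp
  next
    case False
    have "successively R xs" "R (last xs) x" using snoc.prems False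
      by (auto simp: successively_append_iff)
    then have h: "length xs \<le> F (last xs)" using snoc.IH snoc.prems False by auto
    have lx: "last xs \<in> X" using last_in_set[OF False] snoc.prems by auto
    have "F (last xs) \<in> insert 0 (F ` {u\<in>X. R u x})" using lx \<open>R (last xs) x\<close> by blast
    then have "F (last xs) \<le> Max (insert 0 (F ` {u\<in>X. R u x}))"
      using fin by (intro Max_ge) auto
    then show ?thesis using h rx by simp
  qed
qed

lemma successively_nth: "successively P xs \<Longrightarrow> Suc k < length xs \<Longrightarrow> P (xs ! k) (xs ! Suc k)"
proof (induction xs arbitrary: k)
  case Nil then show ?case by simp
next
  case (Cons a xs)
  then show ?case by (cases k) (auto simp: successively_Cons hd_conv_nth)
qed

lemma rank_less:
  fixes W :: "'b::linorder set"
  assumes "finite W" "a \<in> W" "b \<in> W"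
  shows "card {x\<in>W. x \<le> a} < card {x\<in>W. x \<le> b} \<longleftrightarrow> a < b"
proof
  assume "a < b"
  have sub: "{x\<in>W. x \<le> a} \<subseteq> {x\<in>W. x \<le> b}" using \<open>a < b\<close> by auto
  have "b \<in> {x\<in>W. x \<le> b}" "b \<notin> {x\<in>W. x \<le> a}" using assms \<open>a < b\<close> by auto
  then have "{x\<in>W. x \<le> a} \<noteq> {x\<in>W. x \<le> b}" by blast
  with sub have "{x\<in>W. x \<le> a} \<subset> {x\<in>W. x \<le> b}" by blast
  then show "card {x\<in>W. x \<le> a} < card {x\<in>W. x \<le> b}" using assms by (intro psubset_card_mono) auto
next
  assume c: "card {x\<in>W. x \<le> a} < card {x\<in>W. x \<le> b}"
  show "a < b"
  proof (rule ccontr)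
    assume "\<not> a < b"
    then have "{x\<in>W. x \<le> b} \<subseteq> {x\<in>W. x \<le> a}" by auto
    then have "card {x\<in>W. x \<le> b} \<le> card {x\<in>W. x \<le> a}" using assms by (intro card_mono) auto
    then show False using c by simp
  qed
qed

lemma inV: "v \<in> set (matchV A B) \<Longrightarrow> fst v < length A \<and> snd v < length B \<and> A ! fst v = B ! snd v"
  by (auto simp: matchV_set)

lemma rJ_less:
  assumes "u \<in> set (matchV A B)" "v \<in> set (matchV A B)"
  shows "rJ A B u \<le> rJ A B v - 1 \<longleftrightarrow> snd u < snd v"
proof -
  have "finite (colsV A B)" "snd u \<in> colsV A B" "snd v \<in> colsV A B"
    using assms by (auto simp: colsV_def)
  from rank_less[OF this] show ?thesis by (simp add: rJ_def Suc_le_eq)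
qed

lemma rV_pos: "v \<in> set (matchV A B) \<Longrightarrow> rV A B v \<ge> 1"
proof -
  assume v: "v \<in> set (matchV A B)"
  have "A ! fst v \<in> {x \<in> set A \<union> set B. x \<le> A ! fst v}" using inV[OF v] by auto
  then have "{x \<in> set A \<union> set B. x \<le> A ! fst v} \<noteq> {}" by blast
  then show ?thesis unfolding rV_def by (simp add: Suc_le_eq card_gt_0_iff)
qed

lemma rV_less:
  assumes "u \<in> set (matchV A B)" "v \<in> set (matchV A B)"
  shows "rV A B u \<le> rV A B v - 1 \<longleftrightarrow> A ! fst u < A ! fst v"
proof -
  have "finite (set A \<union> set B)" "A ! fst u \<in> set A \<union> set B" "A ! fst v \<in> set A \<union> set B"
    using inV[OF assms(1)] inV[OF assms(2)] by auto
  from rank_less[OF this] have "rV A B u < rV A B v \<longleftrightarrow> A ! fst u < A ! fst v" by (simp add: rV_def)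
  then show ?thesis using rV_pos[OF assms(2)] by linarith
qed

lemma rJ_le_MAXJ: "v \<in> set (matchV A B) \<Longrightarrow> rJ A B v \<le> MAXJ A B"
  unfolding MAXJ_def by (rule Max_ge) auto

lemma hr_less:
  assumes "u \<in> set (matchV A B)" "v \<in> set (matchV A B)"
  shows "MAXJ A B - rJ A B u + 1 \<le> (MAXJ A B - rJ A B v + 1) - 1 \<longleftrightarrow> snd v < snd u"
proof -
  have "rJ A B u \<le> MAXJ A B" "rJ A B v \<le> MAXJ A B" using rJ_le_MAXJ[OF assms(1)] rJ_le_MAXJ[OF assms(2)] by auto
  moreover have "rJ A B v \<le> rJ A B u - 1 \<longleftrightarrow> snd v < snd u" using rJ_less assms by blast
  moreover have "rJ A B u \<ge> 1" "rJ A B v \<ge> 1" by (auto simp: rJ_def)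
  ultimately show ?thesis by linarith
qed

definition Rf :: "'a::linorder list \<Rightarrow> nat \<times> nat \<Rightarrow> nat \<times> nat \<Rightarrow> bool" where
  "Rf A u v \<longleftrightarrow> fst u < fst v \<and> snd u < snd v \<and> A ! fst u < A ! fst v"

definition Rb :: "'a::linorder list \<Rightarrow> nat \<times> nat \<Rightarrow> nat \<times> nat \<Rightarrow> bool" where
  "Rb A u v \<longleftrightarrow> fst v < fst u \<and> snd v < snd u \<and> A ! fst u < A ! fst v"

lemma split_matchV:
  assumes "v \<in> set (matchV A B)"
  obtains ys zs where "matchV A B = ys @ v # zs"
    "set ys = {u \<in> set (matchV A B). lexless u v}"
    "set zs = {u \<in> set (matchV A B). lexless v u}"
proof -
  obtain ys zs where e: "matchV A B = ys @ v # zs" using split_list[OF assms] by blast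
  have s: "sorted_wrt lexless (ys @ v # zs)" using matchV_sorted[of A B] e by simp
  then have "\<forall>u\<in>set ys. lexless u v" "\<forall>u\<in>set zs. lexless v u" "\<forall>u\<in>set ys. \<forall>w\<in>set zs. lexless u w"
    by (auto simp: sorted_wrt_append)
  moreover have "\<And>u. \<not> lexless u u" by (simp add: lexless_def)
  moreover have "\<And>u w. lexless u w \<Longrightarrow> \<not> lexless w u" by (auto simp: lexless_def)
  ultimately have "set ys = {u \<in> set (matchV A B). lexless u v}"
    "set zs = {u \<in> set (matchV A B). lexless v u}"
    unfolding e set_append set_simps by blast+
  then show ?thesis using that e by blast
qed

lemma INC_rec: "\<forall>v\<in>set (matchV A B). INC A B v =
   Max (insert 0 (INC A B ` {u\<in>set (matchV A B). Rf A u v})) + 1"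
proof
  fix v assume v: "v \<in> set (matchV A B)"
  obtain ys zs where e: "matchV A B = ys @ v # zs"
    and ys: "set ys = {u \<in> set (matchV A B). lexless u v}"
    and "set zs = {u \<in> set (matchV A B). lexless v u}"
    by (rule split_matchV[OF v])
  have d: "distinct (ys @ v # zs)" using matchV_distinct[of A B] e by simp
  have I: "INC A B = snd (fold (gstep (rJ A B) (rV A B)) (ys @ v # zs) ([], \<lambda>_. 0))"
    unfolding INC_def fwd_eq e ..
  have "{u \<in> set ys. rJ A B u \<le> rJ A B v - 1 \<and> rV A B u \<le> rV A B v - 1} = {u\<in>set (matchV A B). Rf A u v}"
  proof -
    have H: "u \<in> set (matchV A B) \<Longrightarrow> (lexless u v \<and> snd u < snd v \<and> A ! fst u < A ! fst v) = Rf A u v" for u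
      using inV[of u A B] inV[OF v] by (auto simp: lexless_def Rf_def)
    show ?thesis
    proof (rule set_eqI)
      fix u
      show "u \<in> {u \<in> set ys. rJ A B u \<le> rJ A B v - 1 \<and> rV A B u \<le> rV A B v - 1} \<longleftrightarrow> u \<in> {u\<in>set (matchV A B). Rf A u v}"
      proof (cases "u \<in> set (matchV A B)")
        case True
        then show ?thesis using H[OF True] rJ_less[OF True v] rV_less[OF True v] ys by auto
      next
        case False
        then show ?thesis using ys by auto
      qed
    qed
  qed
  then show "INC A B v = Max (insert 0 (INC A B ` {u\<in>set (matchV A B). Rf A u v})) + 1"
    using gfold_val[OF d, of "rJ A B" "rV A B" "\<lambda>_. 0"] unfolding I[symmetric] by simp
qed

lemma DEC_rec: "\<forall>v\<in>set (matchV A B). DEC A B v =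
   Max (insert 0 (DEC A B ` {u\<in>set (matchV A B). Rb A u v})) + 1"
proof
  fix v assume v: "v \<in> set (matchV A B)"
  obtain ys zs where e: "matchV A B = ys @ v # zs"
    and "set ys = {u \<in> set (matchV A B). lexless u v}"
    and zs: "set zs = {u \<in> set (matchV A B). lexless v u}"
    by (rule split_matchV[OF v])
  have d: "distinct (rev zs @ v # rev ys)" using matchV_distinct[of A B] e by auto
  have I: "DEC A B = snd (fold (gstep (\<lambda>v. MAXJ A B - rJ A B v + 1) (rV A B)) (rev zs @ v # rev ys) ([], \<lambda>_. 0))"
    unfolding DEC_def bwd_eq e by simp
  have "{u \<in> set (rev zs). MAXJ A B - rJ A B u + 1 \<le> (MAXJ A B - rJ A B v + 1) - 1 \<and> rV A B u \<le> rV A B v - 1}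
     = {u\<in>set (matchV A B). Rb A u v}"
  proof -
    have H: "u \<in> set (matchV A B) \<Longrightarrow> (lexless v u \<and> snd v < snd u \<and> A ! fst u < A ! fst v) = Rb A u v" for u
      using inV[of u A B] inV[OF v] by (auto simp: lexless_def Rb_def)
    show ?thesis
    proof (rule set_eqI)
      fix u
      show "u \<in> {u \<in> set (rev zs). MAXJ A B - rJ A B u + 1 \<le> (MAXJ A B - rJ A B v + 1) - 1 \<and> rV A B u \<le> rV A B v - 1} \<longleftrightarrow> u \<in> {u\<in>set (matchV A B). Rb A u v}"
      proof (cases "u \<in> set (matchV A B)")
        case True
        then show ?thesis using H[OF True] hr_less[OF True v] rV_less[OF True v] zs by auto
      next
        case False
        then show ?thesis using zs by auto
      qed
    qed
  qed
  then show "DEC A B v = Max (insert 0 (DEC A B ` {u\<in>set (matchV A B). Rb A u v})) + 1"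
    using gfold_val[OF d, of "\<lambda>v. MAXJ A B - rJ A B v + 1" "rV A B" "\<lambda>_. 0"] unfolding I[symmetric] by simp
qed

lemma successively_from_nth: "(\<And>k. Suc k < length xs \<Longrightarrow> P (xs ! k) (xs ! Suc k)) \<Longrightarrow> successively P xs"
proof (induction xs)
  case Nil then show ?case by simp
next
  case (Cons a xs)
  have "successively P xs" using Cons.prems by (intro Cons.IH) (metis Suc_less_eq length_Cons nth_Cons_Suc)
  moreover have "xs \<noteq> [] \<Longrightarrow> P a (hd xs)" using Cons.prems[of 0] by (simp add: hd_conv_nth)
  ultimately show ?case by (auto simp: successively_Cons)
qed

lemma bcs_fin: "finite {length is | is js. is_bcs A B is js}"
proof -
  have "length is \<le> length A" if "is_bcs A B is js" for "is" js
  proof -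
    have "distinct is" using that unfolding is_bcs_def by (simp add: strict_sorted_iff)
    moreover have "set is \<subseteq> {..<length A}" using that unfolding is_bcs_def by auto
    ultimately show ?thesis by (metis card_lessThan card_mono distinct_card finite_lessThan)
  qed
  then have "{length is | is js. is_bcs A B is js} \<subseteq> {..length A}" by auto
  then show ?thesis using finite_subset by blast
qed

lemma lower:
  assumes v: "v \<in> set (matchV A B)"
  shows "INC A B v + DEC A B v - 1 \<le> LCBS A B"
proof -
  let ?V = "set (matchV A B)"
  obtain c1 where c1: "c1 \<noteq> []" "last c1 = v" "set c1 \<subseteq> ?V" "successively (Rf A) c1" "length c1 = INC A B v"
    using chain_exists[OF List.finite_set INC_rec v] by blast
  obtain c2 where c2: "c2 \<noteq> []" "last c2 = v" "set c2 \<subseteq> ?V" "successively (Rb A) c2" "length c2 = DEC A B v"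
    using chain_exists[OF List.finite_set DEC_rec v] by blast
  define d where "d = rev c2"
  have d: "d \<noteq> []" "hd d = v" "set d \<subseteq> ?V" "successively (\<lambda>x y. Rb A y x) d" "length d = DEC A B v"
    using c2 by (auto simp: d_def hd_rev)
  define cs where "cs = butlast c1 @ d"
  have c1e: "c1 = butlast c1 @ [v]" using c1 by (metis append_butlast_last_id)
  have de: "d = v # tl d" using d by (metis list.collapse)
  have cs2: "cs = c1 @ tl d"
  proof -
    have "c1 @ tl d = butlast c1 @ (v # tl d)" using c1e by (metis append.assoc append_Cons append_Nil)
    then show ?thesis by (simp only: cs_def) (metis de)
  qed
  have len: "length cs = INC A B v + DEC A B v - 1"
    using c1 d unfolding cs_def by (cases c1) auto
  have setcs: "set cs \<subseteq> ?V" using c1 d unfolding cs2 by (auto dest: list.set_sel(2))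
  define Q where "Q = (\<lambda>u w :: nat \<times> nat. fst u < fst w \<and> snd u < snd w)"
  have q1: "successively Q c1" using c1(4) by (rule successively_mono) (auto simp: Q_def Rf_def)
  have q2: "successively Q d" using d(4) by (rule successively_mono) (auto simp: Q_def Rb_def)
  have "successively Q cs"
  proof -
    have "successively Q (v # tl d)" using q2 de by simp
    then have "successively Q (tl d)" "tl d \<noteq> [] \<Longrightarrow> Q v (hd (tl d))" by (auto simp: successively_Cons)
    then show ?thesis unfolding cs2 using q1 c1 by (auto simp: successively_append_iff)
  qed
  then have sQ: "sorted_wrt Q cs" by (subst (asm) successively_conv_sorted_wrt) (auto simp: Q_def transp_def)
  have s1: "sorted_wrt (<) (map fst cs)" unfolding sorted_wrt_map
    by (rule sorted_wrt_mono_rel[OF _ sQ]) (auto simp: Q_def)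
  have s2: "sorted_wrt (<) (map snd cs)" unfolding sorted_wrt_map
    by (rule sorted_wrt_mono_rel[OF _ sQ]) (auto simp: Q_def)
  define h where "h = length c1 - 1"
  have hl: "length (butlast c1) = h" by (simp add: h_def)
  have "is_bcs A B (map fst cs) (map snd cs)"
    unfolding is_bcs_def
  proof (intro conjI)
    show "length (map fst cs) = length (map snd cs)" by simp
    show "sorted_wrt (<) (map fst cs)" by (fact s1)
    show "sorted_wrt (<) (map snd cs)" by (fact s2)
    show "\<forall>i\<in>set (map fst cs). i < length A" using setcs inV by fastforce
    show "\<forall>j\<in>set (map snd cs). j < length B" using setcs inV by fastforce
    show "\<forall>k<length (map fst cs). A ! (map fst cs ! k) = B ! (map snd cs ! k)"
    proof (intro allI impI)
      fix k assume "k < length (map fst cs)"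
      then have "cs ! k \<in> ?V" using setcs nth_mem by fastforce
      then show "A ! (map fst cs ! k) = B ! (map snd cs ! k)" using inV[of "cs ! k" A B] \<open>k < length (map fst cs)\<close> by simp
    qed
    show "\<exists>h<length (map fst cs).
        (\<forall>k<h. A ! (map fst cs ! k) < A ! (map fst cs ! Suc k)) \<and>
        (\<forall>k. h \<le> k \<and> Suc k < length (map fst cs) \<longrightarrow> A ! (map fst cs ! Suc k) < A ! (map fst cs ! k))"
    proof (intro exI conjI allI impI)
      show "h < length (map fst cs)" using d(1) unfolding cs_def h_def by simp
    next
      fix k assume k: "k < h"
      then have "Suc k < length c1" "k < length c1" by (auto simp: h_def)
      then have "cs ! k = c1 ! k" "cs ! Suc k = c1 ! Suc k" unfolding cs2 by (auto simp: nth_append)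
      moreover have "Rf A (c1 ! k) (c1 ! Suc k)" using successively_nth[OF c1(4)] \<open>Suc k < length c1\<close> by blast
      moreover have "Suc k < length cs" using \<open>Suc k < length c1\<close> cs2 by simp
      ultimately show "A ! (map fst cs ! k) < A ! (map fst cs ! Suc k)" by (simp add: Rf_def)
    next
      fix k assume k: "h \<le> k \<and> Suc k < length (map fst cs)"
      then have "Suc k < h + length d" unfolding cs_def using hl by simp
      then have kk: "Suc (k - h) < length d" using k by linarith
      have "cs ! k = d ! (k - h)" "cs ! Suc k = d ! Suc (k - h)" unfolding cs_def using k hl
        by (auto simp: nth_append Suc_diff_le)
      moreover have "Rb A (d ! Suc (k - h)) (d ! (k - h))" using successively_nth[OF d(4) kk] by blast
      ultimately show "A ! (map fst cs ! Suc k) < A ! (map fst cs ! k)" using k by (simp add: Rb_def)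
    qed
  qed
  then have "length (map fst cs) \<le> LCBS A B" unfolding LCBS_def using bcs_fin
    by (intro Max_ge) blast+
  then show ?thesis using len by simp
qed

lemma upper:
  assumes b: "is_bcs A B is js"
  shows "length is \<le> bestLen A B"
proof -
  let ?V = "set (matchV A B)"
  define cs where "cs = zip is js"
  have lij: "length is = length js" using b by (simp add: is_bcs_def)
  have lcs: "length cs = length is" using lij by (simp add: cs_def)
  have csn: "k < length is \<Longrightarrow> cs ! k = (is ! k, js ! k)" for k using lij by (simp add: cs_def)
  have setcs: "set cs \<subseteq> ?V"
  proof
    fix u assume "u \<in> set cs"
    then obtain k where k: "k < length is" "u = cs ! k" using lcs by (metis in_set_conv_nth)
    then show "u \<in> ?V" using b csn[OF k(1)] unfolding is_bcs_def matchV_set by (auto simp: lij)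
  qed
  obtain h where h: "h < length is"
    "\<forall>k. k < h \<longrightarrow> A ! (is ! k) < A ! (is ! Suc k)"
    "\<forall>k. h \<le> k \<and> Suc k < length is \<longrightarrow> A ! (is ! k) > A ! (is ! Suc k)"
    using b unfolding is_bcs_def by blast
  have si: "sorted_wrt (<) is" and sj: "sorted_wrt (<) js" using b by (auto simp: is_bcs_def)
  have step: "Suc k < length is \<Longrightarrow> is ! k < is ! Suc k \<and> js ! k < js ! Suc k" for k
    using sorted_wrt_nth_less[OF si, of k "Suc k"] sorted_wrt_nth_less[OF sj, of k "Suc k"] lij by auto
  define c1 where "c1 = take (Suc h) cs"
  have lc1: "last c1 = cs ! h" using h(1) lcs unfolding c1_def by (simp add: take_Suc_conv_app_nth)
  have c1: "c1 \<noteq> []" "last c1 = cs ! h" "set c1 \<subseteq> ?V" "length c1 = Suc h"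
    using h(1) lcs setcs set_take_subset[of "Suc h" cs] lc1 unfolding c1_def
    by (auto simp: min_def)
  have "successively (Rf A) c1"
  proof (rule successively_from_nth)
    fix k assume k: "Suc k < length c1"
    then have "k < h" "Suc k < length is" using c1 h by auto
    then show "Rf A (c1 ! k) (c1 ! Suc k)" unfolding c1_def using h(2) step csn k c1(4)
      by (simp add: Rf_def)
  qed
  then have "length c1 \<le> INC A B (last c1)" by (intro chain_bound[OF _ INC_rec]) (use c1 in auto)
  then have i1: "Suc h \<le> INC A B (cs ! h)" using c1 by simp
  define c2 where "c2 = rev (drop h cs)"
  have c2: "c2 \<noteq> []" "last c2 = cs ! h" "set c2 \<subseteq> ?V" "length c2 = length is - h"
    using h(1) lcs setcs set_drop_subset[of h cs] unfolding c2_def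
    by (auto simp: last_rev hd_drop_conv_nth)
  have "successively (\<lambda>x y. Rb A y x) (drop h cs)"
  proof (rule successively_from_nth)
    fix k assume k: "Suc k < length (drop h cs)"
    then have "Suc (h + k) < length is" using lcs by simp
    then show "Rb A (drop h cs ! Suc k) (drop h cs ! k)" using h(3) step[of "h+k"] csn lcs
      by (simp add: Rb_def)
  qed
  then have "successively (Rb A) c2" by (simp add: c2_def)
  then have "length c2 \<le> DEC A B (last c2)" by (intro chain_bound[OF _ DEC_rec]) (use c2 in auto)
  then have i2: "length is - h \<le> DEC A B (cs ! h)" using c2 by simp
  have hv: "cs ! h \<in> ?V" using setcs h(1) lcs by (metis nth_mem subsetD)
  have "INC A B (cs ! h) + DEC A B (cs ! h) - 1 \<le> bestLen A B"
    unfolding bestLen_def using hv by (intro Max_ge) auto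
  then show ?thesis using i1 i2 h(1) by linarith
qed

theorem mainTheorem7:
  fixes A B :: "'a::linorder list"
  shows "bestLen A B = LCBS A B"
proof (rule antisym)
  show "bestLen A B \<le> LCBS A B" unfolding bestLen_def using lower by (auto intro!: Max.boundedI)
  show "LCBS A B \<le> bestLen A B" unfolding LCBS_def using upper bcs_fin by (auto intro!: Max.boundedI)
qed
end
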